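(* Let $G=(V,E)$ be a finite graph with nonnegative interactions $J$, and let $\mu$ be the Ising measure with no external field. Then for any vertices $u,v_1,\dots,v_k\in V$, $$\mathbb E_\mu[\sigma(u)\mid \sigma(v_i)=1\text{ for all }1\le i\le k]\le\sum_{i=1}^k\mathbb E_\mu[\sigma(u)\mid\sigma(v_i)=1].$$
   Context: The Ising measure with no external field is $\mu(\sigma)=Z^{-1}\exp(\sum_{uv\in E}J_{uv}\sigma(u)\sigma(v))$ on $\{\pm1\}^V$, $J_{uv}\ge0$. *)

theory Defs
  imports Complex_Main "HOL-Library.FuncSet"
begin

definition graph :: "'a set \<Rightarrow> 'a set set \<Rightarrow> bool" where
  "graph V E \<longleftrightarrow> finite V \<and> (\<forall>e\<in>E. e \<subseteq> V \<and> card e = 2)"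

definition configs :: "'a set \<Rightarrow> ('a \<Rightarrow> int) set" where
  "configs V = V \<rightarrow>\<^sub>E {-1, 1}"

definition ising_weight :: "'a set set \<Rightarrow> ('a set \<Rightarrow> real) \<Rightarrow> ('a \<Rightarrow> int) \<Rightarrow> real" where
  "ising_weight E J \<sigma> = exp (\<Sum>e\<in>E. J e * real_of_int (\<Prod>x\<in>e. \<sigma> x))"

definition ising_Z :: "'a set \<Rightarrow> 'a set set \<Rightarrow> ('a set \<Rightarrow> real) \<Rightarrow> real" where
  "ising_Z V E J = (\<Sum>\<sigma>\<in>configs V. ising_weight E J \<sigma>)"

definition ising_mu :: "'a set \<Rightarrow> 'a set set \<Rightarrow> ('a set \<Rightarrow> real) \<Rightarrow> ('a \<Rightarrow> int) \<Rightarrow> real" where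
  "ising_mu V E J \<sigma> = ising_weight E J \<sigma> / ising_Z V E J"

definition ising_cond_exp ::
  "'a set \<Rightarrow> 'a set set \<Rightarrow> ('a set \<Rightarrow> real) \<Rightarrow> (('a \<Rightarrow> int) \<Rightarrow> real) \<Rightarrow> (('a \<Rightarrow> int) \<Rightarrow> bool) \<Rightarrow> real" where
  "ising_cond_exp V E J f A =
     (\<Sum>\<sigma>\<in>{\<sigma>\<in>configs V. A \<sigma>}. f \<sigma> * ising_mu V E J \<sigma>) /
     (\<Sum>\<sigma>\<in>{\<sigma>\<in>configs V. A \<sigma>}. ising_mu V E J \<sigma>)"

end

theory Submission
  imports Defs
begin


type_synonym st = "int \<times> int \<times> int \<times> int"

definition al :: "st \<Rightarrow> real" where "al t = (case t of (a,b,c,d) \<Rightarrow> real_of_int (a+b+c+d)/2)"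
definition be :: "st \<Rightarrow> real" where "be t = (case t of (a,b,c,d) \<Rightarrow> real_of_int (a+b-c-d)/2)"
definition ga :: "st \<Rightarrow> real" where "ga t = (case t of (a,b,c,d) \<Rightarrow> real_of_int (a-b+c-d)/2)"
definition de :: "st \<Rightarrow> real" where "de t = (case t of (a,b,c,d) \<Rightarrow> real_of_int (-a+b+c-d)/2)"

definition S4 :: "st set" where "S4 = {-1,1} \<times> {-1,1} \<times> {-1,1} \<times> {-1,1}"

definition mon :: "nat \<Rightarrow> nat \<Rightarrow> nat \<Rightarrow> nat \<Rightarrow> st \<Rightarrow> real" where
  "mon a b c d = (\<lambda>t. al t ^ a * be t ^ b * ga t ^ c * de t ^ d)"

lemma S4_explicit: "S4 = {(-1,-1,-1,-1),(-1,-1,-1,1),(-1,-1,1,-1),(-1,-1,1,1),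
  (-1,1,-1,-1),(-1,1,-1,1),(-1,1,1,-1),(-1,1,1,1),
  (1,-1,-1,-1),(1,-1,-1,1),(1,-1,1,-1),(1,-1,1,1),
  (1,1,-1,-1),(1,1,-1,1),(1,1,1,-1),(1,1,1,1)}"
  unfolding S4_def by auto

lemma pm1: "(-1::real)^n = 1 \<or> (-1::real)^n = -1"
  by (cases "even n") auto

lemma p2: "0 \<le> (2::real)^n + (-2)^n"
proof (cases "even n")
  case True then show ?thesis by simp
next
  case False then show ?thesis by (simp add: power_minus[of 2])
qed

lemma ev4: "X \<in> {-1,1} \<Longrightarrow> Y \<in> {-1,1} \<Longrightarrow> Z \<in> {-1,1} \<Longrightarrow> W \<in> {-1,1} \<Longrightarrow>
  0 \<le> (1+X*Y)*(1+Z*W) + (X+Y)*(Z+(W::real))"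
  by auto

lemma mon_sum_nonneg: "0 \<le> (\<Sum>t\<in>S4. mon a b c d t)"
proof -
  define X where "X = (-1::real)^a"
  define Y where "Y = (-1::real)^b"
  define Z where "Z = (-1::real)^c"
  define W where "W = (-1::real)^d"
  have e: "(\<Sum>t\<in>S4. mon a b c d t) = (2^a + (-2)^a)*(0^b*0^c*0^d) + (2^b+(-2)^b)*(0^a*0^c*0^d)
     + (2^c+(-2)^c)*(0^a*0^b*0^d) + (2^d+(-2)^d)*(0^a*0^b*0^c) + ((1+X*Y)*(1+Z*W) + (X+Y)*(Z+W))"
    unfolding S4_explicit mon_def al_def be_def ga_def de_def X_def Y_def Z_def W_def
    by (simp add: algebra_simps)
  have "0 \<le> (1+X*Y)*(1+Z*W) + (X+Y)*(Z+W)"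
    using pm1[of a] pm1[of b] pm1[of c] pm1[of d] unfolding X_def Y_def Z_def W_def
    by (intro ev4) auto
  moreover have "0 \<le> (2^a + (-2)^a)*((0::real)^b*0^c*0^d)" "0 \<le> (2^b + (-2)^b)*((0::real)^a*0^c*0^d)"
    "0 \<le> (2^c + (-2)^c)*((0::real)^a*0^b*0^d)" "0 \<le> (2^d + (-2)^d)*((0::real)^a*0^b*0^c)"
    by (intro mult_nonneg_nonneg p2; simp)+
  ultimately show ?thesis unfolding e by linarith
qed


inductive_set Mset :: "(st \<Rightarrow> real) set" where
  mon: "mon a b c d \<in> Mset"
| add: "f \<in> Mset \<Longrightarrow> g \<in> Mset \<Longrightarrow> (\<lambda>t. f t + g t) \<in> Mset"
| scale: "f \<in> Mset \<Longrightarrow> 0 \<le> c \<Longrightarrow> (\<lambda>t. c * f t) \<in> Mset"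

lemma mon_mult: "(\<lambda>t. mon a b c d t * mon a' b' c' d' t) = mon (a+a') (b+b') (c+c') (d+d')"
  unfolding mon_def by (simp add: power_add fun_eq_iff algebra_simps)

lemma Mset_mult_mon: "f \<in> Mset \<Longrightarrow> (\<lambda>t. f t * mon a b c d t) \<in> Mset"
proof (induction rule: Mset.induct)
  case (mon a' b' c' d') then show ?case by (simp add: mon_mult Mset.mon)
next
  case (add f g) then show ?case using Mset.add[OF add.IH] by (simp add: distrib_right)
next
  case (scale f c) then show ?case using Mset.scale[OF scale.IH scale.hyps(2)] by (simp add: mult.assoc)
qed

lemma Mset_mult: assumes fM: "f \<in> Mset" shows "g \<in> Mset \<Longrightarrow> (\<lambda>t. f t * g t) \<in> Mset"
proof (induction g rule: Mset.induct)
  case (mon a b c d) then show ?case by (rule Mset_mult_mon[OF fM])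
next
  case (add g h) then show ?case using Mset.add[OF add.IH] by (simp add: distrib_left)
next
  case (scale g c) then show ?case using Mset.scale[OF scale.IH scale.hyps(2)] by (simp add: algebra_simps)
qed

lemma Mset_nonneg: "f \<in> Mset \<Longrightarrow> 0 \<le> (\<Sum>t\<in>S4. f t) \<and> 0 \<le> f (1,1,1,1)"
proof (induction rule: Mset.induct)
  case (mon a b c d) then show ?case using mon_sum_nonneg[of a b c d]
    by (simp add: mon_def al_def be_def ga_def de_def)
next
  case (add f g) then show ?case by (simp add: sum.distrib)
next
  case (scale f c) then show ?case by (simp add: sum_distrib_left[symmetric])
qed

lemma Mset_one: "(\<lambda>t. 1) \<in> Mset"
  using Mset.mon[of 0 0 0 0] by (simp add: mon_def)
lemma Mset_al: "al \<in> Mset" using Mset.mon[of 1 0 0 0] by (simp add: mon_def)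
lemma Mset_be: "be \<in> Mset" using Mset.mon[of 0 1 0 0] by (simp add: mon_def)
lemma Mset_ga: "ga \<in> Mset" using Mset.mon[of 0 0 1 0] by (simp add: mon_def)
lemma Mset_de: "de \<in> Mset" using Mset.mon[of 0 0 0 1] by (simp add: mon_def)

definition SS :: "'v set \<Rightarrow> 'v \<Rightarrow> st set" where
  "SS T x = (if x \<in> T then {(1,1,1,1)} else S4)"

inductive_set Cset :: "'v set \<Rightarrow> (('v \<Rightarrow> st) \<Rightarrow> real) set" for V where
  prod: "(\<And>x. x \<in> V \<Longrightarrow> g x \<in> Mset) \<Longrightarrow> (\<lambda>s. \<Prod>x\<in>V. g x (s x)) \<in> Cset V"
| add: "f \<in> Cset V \<Longrightarrow> h \<in> Cset V \<Longrightarrow> (\<lambda>s. f s + h s) \<in> Cset V"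
| scale: "f \<in> Cset V \<Longrightarrow> 0 \<le> c \<Longrightarrow> (\<lambda>s. c * f s) \<in> Cset V"

lemma Cset_mult_prod: "f \<in> Cset V \<Longrightarrow> (\<And>x. x \<in> V \<Longrightarrow> g x \<in> Mset) \<Longrightarrow>
   (\<lambda>s. f s * (\<Prod>x\<in>V. g x (s x))) \<in> Cset V"
proof (induction rule: Cset.induct)
  case (prod g')
  have "(\<lambda>s. (\<Prod>x\<in>V. g' x (s x)) * (\<Prod>x\<in>V. g x (s x))) = (\<lambda>s. \<Prod>x\<in>V. (\<lambda>t. g' x t * g x t) (s x))"
    by (simp add: prod.distrib)
  moreover have "(\<lambda>s. \<Prod>x\<in>V. (\<lambda>t. g' x t * g x t) (s x)) \<in> Cset V"
    by (rule Cset.prod) (simp add: Mset_mult prod)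
  ultimately show ?case by simp
next
  case (add f h) then show ?case using Cset.add[OF add.IH] by (simp add: distrib_right)
next
  case (scale f c) then show ?case using Cset.scale[OF scale.IH scale.hyps(2)] by (simp add: mult.assoc)
qed

lemma Cset_mult: assumes fC: "f \<in> Cset V" shows "h \<in> Cset V \<Longrightarrow> (\<lambda>s. f s * h s) \<in> Cset V"
proof (induction h rule: Cset.induct)
  case (prod g) then show ?case by (rule Cset_mult_prod[OF fC])
next
  case (add g h) then show ?case using Cset.add[OF add.IH] by (simp add: distrib_left)
next
  case (scale g c) then show ?case using Cset.scale[OF scale.IH scale.hyps(2)] by (simp add: algebra_simps)
qed

lemma Cset_nonneg:
  assumes "finite V" shows "f \<in> Cset V \<Longrightarrow> 0 \<le> (\<Sum>s\<in>PiE V (SS T). f s)"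
proof (induction rule: Cset.induct)
  case (prod g)
  have fin: "finite (SS T x)" for x by (simp add: SS_def S4_def)
  have "(\<Sum>s\<in>PiE V (SS T). \<Prod>x\<in>V. g x (s x)) = (\<Prod>x\<in>V. \<Sum>t\<in>SS T x. g x t)"
    by (rule prod_sum_PiE[symmetric]) (use assms fin in auto)
  also have "0 \<le> \<dots>"
    by (rule prod_nonneg) (use Mset_nonneg[OF prod] in \<open>auto simp: SS_def\<close>)
  finally show ?case .
next
  case (add f h) then show ?case by (simp add: sum.distrib)
next
  case (scale f c) then show ?case by (simp add: sum_distrib_left[symmetric])
qed

lemma Cset_const: "finite V \<Longrightarrow> 0 \<le> c \<Longrightarrow> (\<lambda>s. c) \<in> Cset V"
  using Cset.scale[OF Cset.prod[of V "\<lambda>x t. 1"] ] Mset_one by simp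

lemma Cset_site: "x \<in> V \<Longrightarrow> finite V \<Longrightarrow> g \<in> Mset \<Longrightarrow> (\<lambda>s. g (s x)) \<in> Cset V"
proof -
  assume a: "x \<in> V" "finite V" "g \<in> Mset"
  have "(\<lambda>s. \<Prod>y\<in>V. (if y = x then g else (\<lambda>t. 1)) (s y)) \<in> Cset V"
    by (rule Cset.prod) (use a Mset_one in auto)
  moreover have "(\<Prod>y\<in>V. (if y = x then g else (\<lambda>t. 1)) (s y)) = g (s x)" for s
  proof -
    have "(\<Prod>y\<in>V. (if y = x then g else (\<lambda>t. 1)) (s y)) = g (s x) * (\<Prod>y\<in>V-{x}. (if y = x then g else (\<lambda>t. 1)) (s y))"
      using a by (simp add: prod.remove)
    also have "(\<Prod>y\<in>V-{x}. (if y = x then g else (\<lambda>t. 1)) (s y)) = 1"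
      by (rule prod.neutral) auto
    finally show ?thesis by simp
  qed
  ultimately show ?thesis by simp
qed

lemma Cset_sum: assumes "finite V" "finite I" shows "(\<And>i. i \<in> I \<Longrightarrow> f i \<in> Cset V) \<Longrightarrow> (\<lambda>s. \<Sum>i\<in>I. f i s) \<in> Cset V"
  using assms(2)
proof (induction I rule: finite_induct)
  case empty then show ?case using Cset_const[OF assms(1), of 0] by simp
next
  case (insert i I) then show ?case using Cset.add[of "f i" V "\<lambda>s. \<Sum>i\<in>I. f i s"] by simp
qed

lemma Cset_pow: assumes "finite V" "f \<in> Cset V" shows "(\<lambda>s. f s ^ n) \<in> Cset V"
proof (induction n)
  case 0 then show ?case using Cset_const[OF assms(1), of 1] by simp
next
  case (Suc n) then show ?case using Cset_mult[OF assms(2) Suc.IH] by simp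
qed

lemma Cset_exp_nonneg:
  assumes V: "finite V" and f: "f \<in> Cset V" and Q: "Q \<in> Cset V"
  shows "0 \<le> (\<Sum>s\<in>PiE V (SS T). f s * exp (Q s))"
proof -
  have sm: "(\<lambda>n. \<Sum>s\<in>PiE V (SS T). f s * (Q s ^ n / fact n)) sums (\<Sum>s\<in>PiE V (SS T). f s * exp (Q s))"
  proof (intro sums_sum sums_mult)
    fix s show "(\<lambda>n. Q s ^ n / fact n) sums exp (Q s)"
      using exp_converges[of "Q s"] by (simp add: real_scaleR_def divide_inverse_commute)
  qed
  have nn: "0 \<le> (\<Sum>s\<in>PiE V (SS T). f s * (Q s ^ n / fact n))" for n
  proof -
    have "(\<lambda>s. (1 / fact n) * (f s * Q s ^ n)) \<in> Cset V"
      by (rule Cset.scale[OF Cset_mult[OF f Cset_pow[OF V Q]]]) simp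
    then have "0 \<le> (\<Sum>s\<in>PiE V (SS T). (1 / fact n) * (f s * Q s ^ n))"
      by (rule Cset_nonneg[OF V])
    also have "(\<Sum>s\<in>PiE V (SS T). (1 / fact n) * (f s * Q s ^ n)) = (\<Sum>s\<in>PiE V (SS T). f s * (Q s ^ n / fact n))"
      by (rule sum.cong) auto
    finally show ?thesis .
  qed
  show ?thesis by (rule sums_le[OF _ sums_zero sm]) (rule nn)
qed



type_synonym 'v cfg4 = "('v \<Rightarrow> int) \<times> ('v \<Rightarrow> int) \<times> ('v \<Rightarrow> int) \<times> ('v \<Rightarrow> int)"

definition Om :: "'v set \<Rightarrow> 'v set \<Rightarrow> ('v \<Rightarrow> int) set" where
  "Om V T = {\<sigma> \<in> configs V. \<forall>x\<in>T. \<sigma> x = 1}"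

definition Phi :: "'v set \<Rightarrow> 'v cfg4 \<Rightarrow> ('v \<Rightarrow> st)" where
  "Phi V \<sigma> = restrict (\<lambda>x. (fst \<sigma> x, fst (snd \<sigma>) x, fst (snd (snd \<sigma>)) x, snd (snd (snd \<sigma>)) x)) V"

definition Psi :: "'v set \<Rightarrow> ('v \<Rightarrow> st) \<Rightarrow> 'v cfg4" where
  "Psi V s = (restrict (\<lambda>x. fst (s x)) V, restrict (\<lambda>x. fst (snd (s x))) V,
              restrict (\<lambda>x. fst (snd (snd (s x)))) V, restrict (\<lambda>x. snd (snd (snd (s x)))) V)"

lemma S4_mem: "t \<in> S4 \<longleftrightarrow> fst t \<in> {-1,1} \<and> fst (snd t) \<in> {-1,1} \<and> fst (snd (snd t)) \<in> {-1,1} \<and> snd (snd (snd t)) \<in> {-1,1}"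
  by (simp only: S4_def mem_Times_iff)

lemma restrict_self: "\<sigma> \<in> configs V \<Longrightarrow> restrict \<sigma> V = \<sigma>"
  unfolding configs_def by (rule PiE_restrict)

lemma Phi_bij:
  assumes "T \<subseteq> V"
  shows "bij_betw (Phi V) (Om V T \<times> Om V T \<times> Om V T \<times> Om V T) (PiE V (SS T))"
proof (rule bij_betw_byWitness[where f'="Psi V"])
  show "\<forall>a\<in>Om V T \<times> Om V T \<times> Om V T \<times> Om V T. Psi V (Phi V a) = a"
  proof
    fix a assume a: "a \<in> Om V T \<times> Om V T \<times> Om V T \<times> Om V T"
    obtain s1 s2 s3 s4 where a': "a = (s1,s2,s3,s4)" by (cases a) auto
    have c: "s1 \<in> configs V" "s2 \<in> configs V" "s3 \<in> configs V" "s4 \<in> configs V"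
      using a a' by (auto simp: Om_def)
    have "restrict (\<lambda>x. fst (Phi V a x)) V = restrict s1 V"
      "restrict (\<lambda>x. fst (snd (Phi V a x))) V = restrict s2 V"
      "restrict (\<lambda>x. fst (snd (snd (Phi V a x)))) V = restrict s3 V"
      "restrict (\<lambda>x. snd (snd (snd (Phi V a x)))) V = restrict s4 V"
      by (auto intro!: restrict_ext simp: Phi_def a')
    then show "Psi V (Phi V a) = a" unfolding Psi_def using restrict_self[OF c(1)]
      restrict_self[OF c(2)] restrict_self[OF c(3)] restrict_self[OF c(4)] a' by simp
  qed
  show "\<forall>a'\<in>PiE V (SS T). Phi V (Psi V a') = a'"
  proof
    fix s assume s: "s \<in> PiE V (SS T)"
    have "Phi V (Psi V s) = restrict s V"
      unfolding Phi_def Psi_def by (rule restrict_ext) simp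
    then show "Phi V (Psi V s) = s" using s by (simp add: PiE_restrict)
  qed
  show "Phi V ` (Om V T \<times> Om V T \<times> Om V T \<times> Om V T) \<subseteq> PiE V (SS T)"
  proof
    fix s assume "s \<in> Phi V ` (Om V T \<times> Om V T \<times> Om V T \<times> Om V T)"
    then obtain s1 s2 s3 s4 where s: "s = Phi V (s1,s2,s3,s4)" and o: "s1 \<in> Om V T" "s2 \<in> Om V T" "s3 \<in> Om V T" "s4 \<in> Om V T"
      by auto
    have v: "\<And>x. x \<in> V \<Longrightarrow> si \<in> Om V T \<Longrightarrow> si x \<in> {-1,1}" for si
      by (auto simp: Om_def configs_def)
    have t: "\<And>x. x \<in> T \<Longrightarrow> si \<in> Om V T \<Longrightarrow> si x = 1" for si
      by (auto simp: Om_def)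
    show "s \<in> PiE V (SS T)"
      unfolding s Phi_def restrict_PiE_iff
    proof
      fix x assume x: "x \<in> V"
      show "(fst (s1, s2, s3, s4) x, fst (snd (s1, s2, s3, s4)) x, fst (snd (snd (s1, s2, s3, s4))) x,
          snd (snd (snd (s1, s2, s3, s4))) x) \<in> SS T x"
      proof (cases "x \<in> T")
        case True then show ?thesis using t[OF _ o(1)] t[OF _ o(2)] t[OF _ o(3)] t[OF _ o(4)] by (simp add: SS_def)
      next
        case False then show ?thesis using v[OF x o(1)] v[OF x o(2)] v[OF x o(3)] v[OF x o(4)]
          unfolding SS_def S4_def by (simp only: if_False mem_Times_iff fst_conv snd_conv)
      qed
    qed
  qed
  show "Psi V ` PiE V (SS T) \<subseteq> Om V T \<times> Om V T \<times> Om V T \<times> Om V T"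
  proof
    fix \<sigma> assume "\<sigma> \<in> Psi V ` PiE V (SS T)"
    then obtain s where s: "s \<in> PiE V (SS T)" and sig: "\<sigma> = Psi V s" by auto
    have S: "s x \<in> S4" if x: "x \<in> V" for x
    proof -
      have "s x \<in> SS T x" using s x by (simp add: PiE_iff)
      then show ?thesis by (cases "x \<in> T") (auto simp: SS_def S4_def)
    qed
    have TT: "s x = (1,1,1,1)" if x: "x \<in> T" for x
    proof -
      have "s x \<in> SS T x" using s x assms by (auto simp: PiE_iff)
      then show ?thesis using x by (simp add: SS_def)
    qed
    have "restrict (\<lambda>x. fst (s x)) V \<in> Om V T" "restrict (\<lambda>x. fst (snd (s x))) V \<in> Om V T"
      "restrict (\<lambda>x. fst (snd (snd (s x)))) V \<in> Om V T" "restrict (\<lambda>x. snd (snd (snd (s x)))) V \<in> Om V T"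
      unfolding Om_def configs_def using S TT assms by (auto simp: S4_mem simp del: insert_iff)
    then show "\<sigma> \<in> Om V T \<times> Om V T \<times> Om V T \<times> Om V T" unfolding sig Psi_def by simp
  qed
qed


definition QQ :: "'v set set \<Rightarrow> ('v set \<Rightarrow> real) \<Rightarrow> ('v \<Rightarrow> st) \<Rightarrow> real" where
  "QQ E J s = (\<Sum>e\<in>E. J e * ((\<Prod>z\<in>e. al (s z)) + (\<Prod>z\<in>e. be (s z)) + (\<Prod>z\<in>e. ga (s z)) + (\<Prod>z\<in>e. de (s z))))"

definition W4 :: "'v set set \<Rightarrow> ('v set \<Rightarrow> real) \<Rightarrow> 'v cfg4 \<Rightarrow> real" where
  "W4 E J \<sigma> = ising_weight E J (fst \<sigma>) * ising_weight E J (fst (snd \<sigma>)) *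
     ising_weight E J (fst (snd (snd \<sigma>))) * ising_weight E J (snd (snd (snd \<sigma>)))"

lemma pair_id: "al t * al u + be t * be u + ga t * ga u + de t * de u =
   real_of_int (fst t * fst u) + real_of_int (fst (snd t) * fst (snd u)) +
   real_of_int (fst (snd (snd t)) * fst (snd (snd u))) + real_of_int (snd (snd (snd t)) * snd (snd (snd u)))"
  by (cases t; cases u) (simp add: al_def be_def ga_def de_def field_simps)

lemma W4_eq:
  assumes g: "graph V E"
  shows "exp (QQ E J (Phi V \<sigma>)) = W4 E J \<sigma>"
proof -
  obtain s1 s2 s3 s4 where sig: "\<sigma> = (s1,s2,s3,s4)" by (cases \<sigma>) auto
  have e: "J e * ((\<Prod>z\<in>e. al (Phi V \<sigma> z)) + (\<Prod>z\<in>e. be (Phi V \<sigma> z)) + (\<Prod>z\<in>e. ga (Phi V \<sigma> z)) + (\<Prod>z\<in>e. de (Phi V \<sigma> z)))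
     = J e * real_of_int (\<Prod>x\<in>e. s1 x) + J e * real_of_int (\<Prod>x\<in>e. s2 x) + J e * real_of_int (\<Prod>x\<in>e. s3 x) + J e * real_of_int (\<Prod>x\<in>e. s4 x)"
    if eE: "e \<in> E" for e
  proof -
    from g eE have sub: "e \<subseteq> V" and c2: "card e = 2" by (auto simp: graph_def)
    then obtain x y where exy: "e = {x,y}" "x \<noteq> y" by (auto simp: card_2_iff)
    with sub have xy: "x \<in> V" "y \<in> V" by auto
    have "(\<Prod>z\<in>e. al (Phi V \<sigma> z)) + (\<Prod>z\<in>e. be (Phi V \<sigma> z)) + (\<Prod>z\<in>e. ga (Phi V \<sigma> z)) + (\<Prod>z\<in>e. de (Phi V \<sigma> z))
       = al (Phi V \<sigma> x) * al (Phi V \<sigma> y) + be (Phi V \<sigma> x) * be (Phi V \<sigma> y) + ga (Phi V \<sigma> x) * ga (Phi V \<sigma> y) + de (Phi V \<sigma> x) * de (Phi V \<sigma> y)"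
      using exy by simp
    also have "\<dots> = real_of_int (\<Prod>x\<in>e. s1 x) + real_of_int (\<Prod>x\<in>e. s2 x) + real_of_int (\<Prod>x\<in>e. s3 x) + real_of_int (\<Prod>x\<in>e. s4 x)"
      unfolding pair_id using exy xy by (simp add: Phi_def sig)
    finally show ?thesis by (simp only: distrib_left)
  qed
  have "QQ E J (Phi V \<sigma>) = (\<Sum>e\<in>E. J e * real_of_int (\<Prod>x\<in>e. s1 x)) + (\<Sum>e\<in>E. J e * real_of_int (\<Prod>x\<in>e. s2 x))
      + (\<Sum>e\<in>E. J e * real_of_int (\<Prod>x\<in>e. s3 x)) + (\<Sum>e\<in>E. J e * real_of_int (\<Prod>x\<in>e. s4 x))"
    unfolding QQ_def by (simp add: e sum.distrib cong: sum.cong)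
  then show ?thesis by (simp add: W4_def ising_weight_def sig exp_add[symmetric])
qed

lemma Cset_prodsub:
  assumes "finite V" "e \<subseteq> V" "\<phi> \<in> Mset"
  shows "(\<lambda>s. \<Prod>z\<in>e. \<phi> (s z)) \<in> Cset V"
proof -
  have "(\<lambda>s. \<Prod>z\<in>V. (if z \<in> e then \<phi> else (\<lambda>t. 1)) (s z)) \<in> Cset V"
    by (rule Cset.prod) (use assms Mset_one in auto)
  moreover have "(\<Prod>z\<in>V. (if z \<in> e then \<phi> else (\<lambda>t. 1)) (s z)) = (\<Prod>z\<in>e. \<phi> (s z))" for s
  proof -
    have "(\<Prod>z\<in>V. (if z \<in> e then \<phi> else (\<lambda>t. 1)) (s z)) = (\<Prod>z\<in>V. if z \<in> e then \<phi> (s z) else 1)"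
      by (rule prod.cong) auto
    also have "\<dots> = (\<Prod>z\<in>V \<inter> e. \<phi> (s z))" by (rule prod.inter_restrict[OF assms(1), symmetric])
    also have "V \<inter> e = e" using assms(2) by auto
    finally show ?thesis .
  qed
  ultimately show ?thesis by simp
qed

lemma QQ_Cset:
  assumes g: "graph V E" and J: "\<forall>e\<in>E. J e \<ge> 0"
  shows "QQ E J \<in> Cset V"
proof -
  have fV: "finite V" using g by (simp add: graph_def)
  have EP: "E \<subseteq> Pow V" using g by (auto simp: graph_def)
  have "finite (Pow V)" using fV by simp
  then have fE: "finite E" using finite_subset[OF EP] by simp
  have "(\<lambda>s. \<Sum>e\<in>E. J e * ((\<Prod>z\<in>e. al (s z)) + (\<Prod>z\<in>e. be (s z)) + (\<Prod>z\<in>e. ga (s z)) + (\<Prod>z\<in>e. de (s z)))) \<in> Cset V"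
  proof (rule Cset_sum[OF fV fE])
    fix e assume eE: "e \<in> E"
    then have sub: "e \<subseteq> V" using g by (auto simp: graph_def)
    show "(\<lambda>s. J e * ((\<Prod>z\<in>e. al (s z)) + (\<Prod>z\<in>e. be (s z)) + (\<Prod>z\<in>e. ga (s z)) + (\<Prod>z\<in>e. de (s z)))) \<in> Cset V"
      using Cset.scale[OF Cset.add[OF Cset.add[OF Cset.add[OF Cset_prodsub[OF fV sub Mset_al]
           Cset_prodsub[OF fV sub Mset_be]] Cset_prodsub[OF fV sub Mset_ga]] Cset_prodsub[OF fV sub Mset_de]], of "J e"]
        J eE by simp
  qed
  then show ?thesis unfolding QQ_def[abs_def] .
qed

lemma POS:
  assumes g: "graph V E" and J: "\<forall>e\<in>E. J e \<ge> 0" and T: "T \<subseteq> V" and F: "F \<in> Cset V"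
  shows "0 \<le> (\<Sum>\<sigma>\<in>Om V T \<times> Om V T \<times> Om V T \<times> Om V T. F (Phi V \<sigma>) * W4 E J \<sigma>)"
proof -
  have fV: "finite V" using g by (simp add: graph_def)
  have "(\<Sum>\<sigma>\<in>Om V T \<times> Om V T \<times> Om V T \<times> Om V T. F (Phi V \<sigma>) * W4 E J \<sigma>)
      = (\<Sum>\<sigma>\<in>Om V T \<times> Om V T \<times> Om V T \<times> Om V T. (\<lambda>s. F s * exp (QQ E J s)) (Phi V \<sigma>))"
    by (simp add: W4_eq[OF g])
  also have "\<dots> = (\<Sum>s\<in>PiE V (SS T). F s * exp (QQ E J s))"
    by (rule sum.reindex_bij_betw[OF Phi_bij[OF T]])
  also have "0 \<le> \<dots>" by (rule Cset_exp_nonneg[OF fV F QQ_Cset[OF g J]])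
  finally show ?thesis by simp
qed



definition NN :: "'v set \<Rightarrow> 'v set set \<Rightarrow> ('v set \<Rightarrow> real) \<Rightarrow> 'v set \<Rightarrow> (('v \<Rightarrow> int) \<Rightarrow> real) \<Rightarrow> real" where
  "NN V E J T f = (\<Sum>\<sigma>\<in>Om V T. f \<sigma> * ising_weight E J \<sigma>)"

definition proj :: "nat \<Rightarrow> 'v cfg4 \<Rightarrow> ('v \<Rightarrow> int)" where
  "proj p \<sigma> = (if p = 0 then fst \<sigma> else if p = 1 then fst (snd \<sigma>) else if p = 2 then fst (snd (snd \<sigma>)) else snd (snd (snd \<sigma>)))"

lemma sum_prod2: fixes f :: "'x \<Rightarrow> real" shows "(\<Sum>\<sigma>\<in>A \<times> B. f (fst \<sigma>) * g (snd \<sigma>)) = sum f A * sum g B"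
  unfolding sum_product sum.cartesian_product by (simp add: split_def)

lemma FACT: fixes g0 :: "'x \<Rightarrow> real" shows "(\<Sum>\<sigma>\<in>A \<times> B \<times> C \<times> D. g0 (fst \<sigma>) * g1 (fst (snd \<sigma>)) * g2 (fst (snd (snd \<sigma>))) * g3 (snd (snd (snd \<sigma>))))
   = sum g0 A * sum g1 B * sum g2 C * sum g3 D"
proof -
  have "(\<Sum>\<sigma>\<in>A \<times> B \<times> C \<times> D. g0 (fst \<sigma>) * g1 (fst (snd \<sigma>)) * g2 (fst (snd (snd \<sigma>))) * g3 (snd (snd (snd \<sigma>))))
    = (\<Sum>\<sigma>\<in>A \<times> B \<times> C \<times> D. g0 (fst \<sigma>) * (\<lambda>\<tau>. g1 (fst \<tau>) * (\<lambda>\<rho>. g2 (fst \<rho>) * g3 (snd \<rho>)) (snd \<tau>)) (snd \<sigma>))"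
    by (simp only: mult.assoc)
  also have "\<dots> = sum g0 A * (\<Sum>\<tau>\<in>B \<times> C \<times> D. g1 (fst \<tau>) * (\<lambda>\<rho>. g2 (fst \<rho>) * g3 (snd \<rho>)) (snd \<tau>))"
    by (rule sum_prod2)
  also have "(\<Sum>\<tau>\<in>B \<times> C \<times> D. g1 (fst \<tau>) * (\<lambda>\<rho>. g2 (fst \<rho>) * g3 (snd \<rho>)) (snd \<tau>))
     = sum g1 B * (\<Sum>\<rho>\<in>C \<times> D. g2 (fst \<rho>) * g3 (snd \<rho>))"
    by (rule sum_prod2)
  also have "(\<Sum>\<rho>\<in>C \<times> D. g2 (fst \<rho>) * g3 (snd \<rho>)) = sum g2 C * sum g3 D"
    by (rule sum_prod2)
  finally show ?thesis by (simp add: mult.assoc)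
qed

definition O4 where "O4 V T = Om V T \<times> Om V T \<times> Om V T \<times> Om V T"

lemma MOM:
  assumes "p \<in> {0,1,2,3}" "q \<in> {0,1,2,3}" "r \<in> {0,1,2,3}"
  shows "(\<Sum>\<sigma>\<in>O4 V T. (fa (proj p \<sigma>) * fb (proj q \<sigma>) * fc (proj r \<sigma>)) * W4 E J \<sigma>)
    = (\<Prod>c\<in>{0,1,2,3::nat}. NN V E J T (\<lambda>\<omega>. (if p = c then fa \<omega> else 1) * (if q = c then fb \<omega> else 1) * (if r = c then fc \<omega> else 1)))"
proof -
  let ?g = "\<lambda>c \<omega>. (if p = c then fa \<omega> else 1) * (if q = c then fb \<omega> else 1) * (if r = c then fc \<omega> else 1) * ising_weight E J \<omega>"
  have pt: "(fa (proj p \<sigma>) * fb (proj q \<sigma>) * fc (proj r \<sigma>)) * W4 E J \<sigma>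
     = ?g 0 (fst \<sigma>) * ?g 1 (fst (snd \<sigma>)) * ?g 2 (fst (snd (snd \<sigma>))) * ?g 3 (snd (snd (snd \<sigma>)))" for \<sigma>
    using assms by (auto simp: proj_def W4_def mult_ac)
  have "(\<Sum>\<sigma>\<in>O4 V T. (fa (proj p \<sigma>) * fb (proj q \<sigma>) * fc (proj r \<sigma>)) * W4 E J \<sigma>)
     = (\<Sum>\<sigma>\<in>O4 V T. ?g 0 (fst \<sigma>) * ?g 1 (fst (snd \<sigma>)) * ?g 2 (fst (snd (snd \<sigma>))) * ?g 3 (snd (snd (snd \<sigma>))))"
    by (simp only: pt)
  also have "\<dots> = sum (?g 0) (Om V T) * sum (?g 1) (Om V T) * sum (?g 2) (Om V T) * sum (?g 3) (Om V T)"
    unfolding O4_def by (rule FACT)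
  finally show ?thesis by (simp add: NN_def mult.assoc)
qed


definition bc :: "nat \<Rightarrow> real" where "bc p = (if p = 0 \<or> p = 1 then 1 else -1)"
definition gc :: "nat \<Rightarrow> real" where "gc p = (if p = 0 \<or> p = 2 then 1 else -1)"
definition dc :: "nat \<Rightarrow> real" where "dc p = (if p = 1 \<or> p = 2 then 1 else -1)"

abbreviation P4 where "P4 \<equiv> {0,1,2,3::nat}"

lemma al_exp: "u \<in> V \<Longrightarrow> al (Phi V \<sigma> u) = (\<Sum>p\<in>P4. real_of_int (proj p \<sigma> u)) / 2"
  by (simp add: al_def Phi_def proj_def)
lemma be_exp: "u \<in> V \<Longrightarrow> be (Phi V \<sigma> u) = (\<Sum>p\<in>P4. bc p * real_of_int (proj p \<sigma> u)) / 2"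
  by (simp add: be_def Phi_def proj_def bc_def)
lemma ga_exp: "u \<in> V \<Longrightarrow> ga (Phi V \<sigma> u) = (\<Sum>p\<in>P4. gc p * real_of_int (proj p \<sigma> u)) / 2"
  by (simp add: ga_def Phi_def proj_def gc_def)
lemma de_exp: "u \<in> V \<Longrightarrow> de (Phi V \<sigma> u) = (\<Sum>p\<in>P4. dc p * real_of_int (proj p \<sigma> u)) / 2"
  by (simp add: de_def Phi_def proj_def dc_def)

lemma swap3: "(\<Sum>\<sigma>\<in>A. \<Sum>p\<in>P. \<Sum>q\<in>Q. \<Sum>r\<in>R. (Y p q r \<sigma> :: real)) = (\<Sum>p\<in>P. \<Sum>q\<in>Q. \<Sum>r\<in>R. \<Sum>\<sigma>\<in>A. Y p q r \<sigma>)"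
  apply (subst sum.swap[where A=A and B=P])
  apply (rule sum.cong[OF refl])
  apply (subst sum.swap[where A=A and B=Q])
  apply (rule sum.cong[OF refl])
  apply (subst sum.swap[where A=A and B=R])
  apply (rule refl)
  done

lemma triple_prod: "(\<Sum>p\<in>P. x p) * (\<Sum>q\<in>Q. y q) * (\<Sum>r\<in>R. z r) * (k::real) = (\<Sum>p\<in>P. \<Sum>q\<in>Q. \<Sum>r\<in>R. x p * y q * z r * k)"
proof -
  have "(\<Sum>p\<in>P. x p) * (\<Sum>q\<in>Q. y q) = (\<Sum>p\<in>P. \<Sum>q\<in>Q. x p * y q)" by (rule sum_product)
  then have "(\<Sum>p\<in>P. x p) * (\<Sum>q\<in>Q. y q) * (\<Sum>r\<in>R. z r) * k = (\<Sum>p\<in>P. \<Sum>q\<in>Q. x p * y q) * ((\<Sum>r\<in>R. z r) * k)"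
    by simp
  also have "\<dots> = (\<Sum>p\<in>P. \<Sum>q\<in>Q. x p * y q * ((\<Sum>r\<in>R. z r) * k))"
    by (simp only: sum_distrib_right)
  also have "\<dots> = (\<Sum>p\<in>P. \<Sum>q\<in>Q. \<Sum>r\<in>R. x p * y q * z r * k)"
    by (intro sum.cong refl) (simp add: sum_distrib_left sum_distrib_right mult.assoc)
  finally show ?thesis .
qed

lemma GEN3:
  "(\<Sum>\<sigma>\<in>O4 V T. ((\<Sum>p\<in>P4. ca p * fa (proj p \<sigma>)) * (\<Sum>p\<in>P4. cb p * fb (proj p \<sigma>)) * (\<Sum>p\<in>P4. cd p * fc (proj p \<sigma>))) * W4 E J \<sigma>)
   = (\<Sum>p\<in>P4. \<Sum>q\<in>P4. \<Sum>r\<in>P4. (ca p * cb q * cd r) *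
      (\<Prod>c\<in>P4. NN V E J T (\<lambda>\<omega>. (if p = c then fa \<omega> else 1) * (if q = c then fb \<omega> else 1) * (if r = c then fc \<omega> else 1))))"
proof -
  let ?X = "\<lambda>p q r \<sigma>. (fa (proj p \<sigma>) * fb (proj q \<sigma>) * fc (proj r \<sigma>)) * W4 E J \<sigma>"
  have pt: "((\<Sum>p\<in>P4. ca p * fa (proj p \<sigma>)) * (\<Sum>p\<in>P4. cb p * fb (proj p \<sigma>)) * (\<Sum>p\<in>P4. cd p * fc (proj p \<sigma>))) * W4 E J \<sigma>
     = (\<Sum>p\<in>P4. \<Sum>q\<in>P4. \<Sum>r\<in>P4. (ca p * cb q * cd r) * ?X p q r \<sigma>)" for \<sigma>
  proof -
    have "((\<Sum>p\<in>P4. ca p * fa (proj p \<sigma>)) * (\<Sum>p\<in>P4. cb p * fb (proj p \<sigma>)) * (\<Sum>p\<in>P4. cd p * fc (proj p \<sigma>))) * W4 E J \<sigma>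
       = (\<Sum>p\<in>P4. \<Sum>q\<in>P4. \<Sum>r\<in>P4. ca p * fa (proj p \<sigma>) * (cb q * fb (proj q \<sigma>)) * (cd r * fc (proj r \<sigma>)) * W4 E J \<sigma>)"
      by (rule triple_prod)
    also have "\<dots> = (\<Sum>p\<in>P4. \<Sum>q\<in>P4. \<Sum>r\<in>P4. (ca p * cb q * cd r) * ?X p q r \<sigma>)"
      by (intro sum.cong refl) (simp add: mult_ac)
    finally show ?thesis .
  qed
  have "(\<Sum>\<sigma>\<in>O4 V T. ((\<Sum>p\<in>P4. ca p * fa (proj p \<sigma>)) * (\<Sum>p\<in>P4. cb p * fb (proj p \<sigma>)) * (\<Sum>p\<in>P4. cd p * fc (proj p \<sigma>))) * W4 E J \<sigma>)
     = (\<Sum>p\<in>P4. \<Sum>q\<in>P4. \<Sum>r\<in>P4. \<Sum>\<sigma>\<in>O4 V T. (ca p * cb q * cd r) * ?X p q r \<sigma>)"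
    unfolding pt by (rule swap3)
  also have "\<dots> = (\<Sum>p\<in>P4. \<Sum>q\<in>P4. \<Sum>r\<in>P4. (ca p * cb q * cd r) *
      (\<Prod>c\<in>P4. NN V E J T (\<lambda>\<omega>. (if p = c then fa \<omega> else 1) * (if q = c then fb \<omega> else 1) * (if r = c then fc \<omega> else 1))))"
  proof (intro sum.cong refl)
    fix p q r assume pqr: "p \<in> P4" "q \<in> P4" "r \<in> P4"
    show "(\<Sum>\<sigma>\<in>O4 V T. (ca p * cb q * cd r) * ?X p q r \<sigma>) = (ca p * cb q * cd r) *
      (\<Prod>c\<in>P4. NN V E J T (\<lambda>\<omega>. (if p = c then fa \<omega> else 1) * (if q = c then fb \<omega> else 1) * (if r = c then fc \<omega> else 1)))"
      unfolding sum_distrib_left[symmetric] by (subst MOM[OF pqr]) (rule refl)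
  qed
  finally show ?thesis .
qed

definition ec :: "nat \<Rightarrow> real" where "ec p = (if p = 0 then 1 else 0)"

lemma ec_sum: "(\<Sum>p\<in>P4. ec p * f (proj p \<sigma>)) = f (fst \<sigma>)"
  by (simp add: ec_def proj_def)

lemma ec_sum1: "sum ec P4 = 1" by (simp add: ec_def)

lemma half_sum: "(\<Sum>p\<in>A. (c p / 2) * f p) = (\<Sum>p\<in>A. c p * f p) / (2::real)"
  by (simp add: sum_divide_distrib)

lemma half_sum1: "(\<Sum>p\<in>A. (1 / 2) * f p) = (\<Sum>p\<in>A. f p) / (2::real)"
  by (simp add: sum_divide_distrib)

lemma GHS_eq:
  assumes "u \<in> V" "b \<in> V" "a \<in> V"
  shows "(\<Sum>\<sigma>\<in>O4 V T. (be (Phi V \<sigma> u) * ga (Phi V \<sigma> b) * de (Phi V \<sigma> a)) * W4 E J \<sigma>)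
   = - (1/2) * NN V E J T (\<lambda>\<omega>. 1) *
      (NN V E J T (\<lambda>\<omega>. 1) ^ 2 * NN V E J T (\<lambda>\<omega>. real_of_int (\<omega> u) * real_of_int (\<omega> b) * real_of_int (\<omega> a))
       - NN V E J T (\<lambda>\<omega>. 1) * (NN V E J T (\<lambda>\<omega>. real_of_int (\<omega> u) * real_of_int (\<omega> b)) * NN V E J T (\<lambda>\<omega>. real_of_int (\<omega> a))
          + NN V E J T (\<lambda>\<omega>. real_of_int (\<omega> u) * real_of_int (\<omega> a)) * NN V E J T (\<lambda>\<omega>. real_of_int (\<omega> b))
          + NN V E J T (\<lambda>\<omega>. real_of_int (\<omega> b) * real_of_int (\<omega> a)) * NN V E J T (\<lambda>\<omega>. real_of_int (\<omega> u)))
       + 2 * NN V E J T (\<lambda>\<omega>. real_of_int (\<omega> u)) * NN V E J T (\<lambda>\<omega>. real_of_int (\<omega> b)) * NN V E J T (\<lambda>\<omega>. real_of_int (\<omega> a)))"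
    (is "_ = ?R")
proof -
  have "(\<Sum>\<sigma>\<in>O4 V T. (be (Phi V \<sigma> u) * ga (Phi V \<sigma> b) * de (Phi V \<sigma> a)) * W4 E J \<sigma>)
    = (\<Sum>\<sigma>\<in>O4 V T. ((\<Sum>p\<in>P4. (bc p / 2) * (\<lambda>\<omega>. real_of_int (\<omega> u)) (proj p \<sigma>)) * (\<Sum>p\<in>P4. (gc p / 2) * (\<lambda>\<omega>. real_of_int (\<omega> b)) (proj p \<sigma>))
         * (\<Sum>p\<in>P4. (dc p / 2) * (\<lambda>\<omega>. real_of_int (\<omega> a)) (proj p \<sigma>))) * W4 E J \<sigma>)"
    unfolding be_exp[OF assms(1)] ga_exp[OF assms(2)] de_exp[OF assms(3)] half_sum by (rule refl)
  also have "\<dots> = ?R" unfolding GEN3[where ca="\<lambda>p. bc p / 2" and cb="\<lambda>p. gc p / 2" and cd="\<lambda>p. dc p / 2" and fa="\<lambda>\<omega>. real_of_int (\<omega> u)" and fb="\<lambda>\<omega>. real_of_int (\<omega> b)" and fc="\<lambda>\<omega>. real_of_int (\<omega> a)"]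
    by (simp add: bc_def gc_def dc_def) (simp add: field_simps power2_eq_square)
  finally show ?thesis .
qed

lemma GII_eq:
  assumes "u \<in> V" "b \<in> V"
  shows "(\<Sum>\<sigma>\<in>O4 V T. (be (Phi V \<sigma> u) * be (Phi V \<sigma> b)) * W4 E J \<sigma>)
   = NN V E J T (\<lambda>\<omega>. 1) ^ 2 * (NN V E J T (\<lambda>\<omega>. 1) * NN V E J T (\<lambda>\<omega>. real_of_int (\<omega> u) * real_of_int (\<omega> b))
       - NN V E J T (\<lambda>\<omega>. real_of_int (\<omega> u)) * NN V E J T (\<lambda>\<omega>. real_of_int (\<omega> b)))"
    (is "_ = ?R")
proof -
  have "(\<Sum>\<sigma>\<in>O4 V T. (be (Phi V \<sigma> u) * be (Phi V \<sigma> b)) * W4 E J \<sigma>)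
    = (\<Sum>\<sigma>\<in>O4 V T. ((\<Sum>p\<in>P4. (bc p / 2) * (\<lambda>\<omega>. real_of_int (\<omega> u)) (proj p \<sigma>)) * (\<Sum>p\<in>P4. (bc p / 2) * (\<lambda>\<omega>. real_of_int (\<omega> b)) (proj p \<sigma>))
         * (\<Sum>p\<in>P4. ec p * (\<lambda>\<omega>. 1) (proj p \<sigma>))) * W4 E J \<sigma>)"
    unfolding be_exp[OF assms(1)] be_exp[OF assms(2)] ec_sum ec_sum1 half_sum mult_1_right by (rule refl)
  also have "\<dots> = ?R" unfolding GEN3[where ca="\<lambda>p. bc p / 2" and cb="\<lambda>p. bc p / 2" and cd=ec and fa="\<lambda>\<omega>. real_of_int (\<omega> u)" and fb="\<lambda>\<omega>. real_of_int (\<omega> b)" and fc="\<lambda>\<omega>. 1"]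
    by (simp add: bc_def ec_def) (simp add: field_simps power2_eq_square)
  finally show ?thesis .
qed

lemma GI_eq:
  assumes "u \<in> V"
  shows "(\<Sum>\<sigma>\<in>O4 V T. al (Phi V \<sigma> u) * W4 E J \<sigma>)
   = 2 * NN V E J T (\<lambda>\<omega>. 1) ^ 3 * NN V E J T (\<lambda>\<omega>. real_of_int (\<omega> u))"
    (is "_ = ?R")
proof -
  have "(\<Sum>\<sigma>\<in>O4 V T. al (Phi V \<sigma> u) * W4 E J \<sigma>)
    = (\<Sum>\<sigma>\<in>O4 V T. ((\<Sum>p\<in>P4. (1 / 2) * (\<lambda>\<omega>. real_of_int (\<omega> u)) (proj p \<sigma>)) * (\<Sum>p\<in>P4. ec p * (\<lambda>\<omega>. 1) (proj p \<sigma>))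
         * (\<Sum>p\<in>P4. ec p * (\<lambda>\<omega>. 1) (proj p \<sigma>))) * W4 E J \<sigma>)"
    unfolding al_exp[OF assms(1)] ec_sum ec_sum1 half_sum1 mult_1_right by (rule refl)
  also have "\<dots> = ?R" unfolding GEN3[where ca="\<lambda>p. 1 / 2" and cb=ec and cd=ec and fa="\<lambda>\<omega>. real_of_int (\<omega> u)" and fb="\<lambda>\<omega>. 1" and fc="\<lambda>\<omega>. 1"]
    by (simp add: ec_def) (simp add: field_simps power2_eq_square power3_eq_cube)
  finally show ?thesis .
qed



context
  fixes V :: "'v set" and E :: "'v set set" and J :: "'v set \<Rightarrow> real"
  assumes g: "graph V E" and Jn: "\<forall>e\<in>E. J e \<ge> 0"
begin

abbreviation "Zf T \<equiv> NN V E J T (\<lambda>\<omega>. 1)"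
abbreviation "N1 T x \<equiv> NN V E J T (\<lambda>\<omega>. real_of_int (\<omega> x))"
abbreviation "N2 T x y \<equiv> NN V E J T (\<lambda>\<omega>. real_of_int (\<omega> x) * real_of_int (\<omega> y))"
abbreviation "N3 T x y z \<equiv> NN V E J T (\<lambda>\<omega>. real_of_int (\<omega> x) * real_of_int (\<omega> y) * real_of_int (\<omega> z))"

lemma finV: "finite V" using g by (simp add: graph_def)

lemma fin_Om: "finite (Om V T)"
proof -
  have "finite (configs V)" unfolding configs_def using finV by (simp add: finite_PiE)
  then show ?thesis unfolding Om_def by simp
qed

lemma Z_pos: assumes "T \<subseteq> V" shows "0 < Zf T"
proof -
  have "restrict (\<lambda>x. 1) V \<in> Om V T" using assms by (auto simp: Om_def configs_def)
  then have "Om V T \<noteq> {}" by auto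
  then show ?thesis unfolding NN_def
    by (intro sum_pos fin_Om) (simp_all add: ising_weight_def)
qed

lemma GI: assumes "T \<subseteq> V" "x \<in> V" shows "0 \<le> N1 T x"
proof -
  have "0 \<le> (\<Sum>\<sigma>\<in>O4 V T. al (Phi V \<sigma> x) * W4 E J \<sigma>)"
    unfolding O4_def by (rule POS[OF g Jn assms(1) Cset_site[OF assms(2) finV Mset_al]])
  then have "0 \<le> 2 * Zf T ^ 3 * N1 T x" by (simp only: GI_eq[OF assms(2)])
  then show ?thesis using Z_pos[OF assms(1)] by (simp add: zero_le_mult_iff)
qed

lemma GII: assumes "T \<subseteq> V" "x \<in> V" "y \<in> V" shows "N1 T x * N1 T y \<le> Zf T * N2 T x y"
proof -
  have "0 \<le> (\<Sum>\<sigma>\<in>O4 V T. (be (Phi V \<sigma> x) * be (Phi V \<sigma> y)) * W4 E J \<sigma>)"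
    unfolding O4_def
    by (rule POS[OF g Jn assms(1) Cset_mult[OF Cset_site[OF assms(2) finV Mset_be] Cset_site[OF assms(3) finV Mset_be]]])
  then have "0 \<le> Zf T ^ 2 * (Zf T * N2 T x y - N1 T x * N1 T y)" by (simp only: GII_eq[OF assms(2,3)])
  then show ?thesis using Z_pos[OF assms(1)] by (simp add: zero_le_mult_iff)
qed

lemma GHS: assumes "T \<subseteq> V" "u \<in> V" "b \<in> V" "a \<in> V"
  shows "Zf T ^ 2 * N3 T u b a - Zf T * (N2 T u b * N1 T a + N2 T u a * N1 T b + N2 T b a * N1 T u)
       + 2 * N1 T u * N1 T b * N1 T a \<le> 0"
proof -
  have "0 \<le> (\<Sum>\<sigma>\<in>O4 V T. (be (Phi V \<sigma> u) * ga (Phi V \<sigma> b) * de (Phi V \<sigma> a)) * W4 E J \<sigma>)"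
    unfolding O4_def
    by (rule POS[OF g Jn assms(1) Cset_mult[OF Cset_mult[OF Cset_site[OF assms(2) finV Mset_be] Cset_site[OF assms(3) finV Mset_ga]] Cset_site[OF assms(4) finV Mset_de]]])
  then have "0 \<le> - (1/2) * Zf T * (Zf T ^ 2 * N3 T u b a - Zf T * (N2 T u b * N1 T a + N2 T u a * N1 T b + N2 T b a * N1 T u)
       + 2 * N1 T u * N1 T b * N1 T a)" by (simp only: GHS_eq[OF assms(2,3,4)])
  then show ?thesis using Z_pos[OF assms(1)] by (auto simp: mult_le_0_iff zero_le_mult_iff)
qed

lemma NN_insert: assumes "a \<in> V"
  shows "NN V E J (insert a T) f = (NN V E J T f + NN V E J T (\<lambda>\<omega>. f \<omega> * real_of_int (\<omega> a))) / 2"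
proof -
  have set: "Om V (insert a T) = {\<sigma> \<in> Om V T. \<sigma> a = 1}" by (auto simp: Om_def)
  have "NN V E J (insert a T) f = (\<Sum>\<sigma>\<in>Om V T. if \<sigma> a = 1 then f \<sigma> * ising_weight E J \<sigma> else 0)"
    unfolding NN_def set by (rule sum.inter_filter[OF fin_Om])
  also have "\<dots> = (\<Sum>\<sigma>\<in>Om V T. (f \<sigma> * ising_weight E J \<sigma> + (f \<sigma> * real_of_int (\<sigma> a)) * ising_weight E J \<sigma>) / 2)"
  proof (rule sum.cong[OF refl])
    fix \<sigma> assume "\<sigma> \<in> Om V T"
    then have "\<sigma> a \<in> {-1,1}" using assms by (auto simp: Om_def configs_def)
    then show "(if \<sigma> a = 1 then f \<sigma> * ising_weight E J \<sigma> else 0) = (f \<sigma> * ising_weight E J \<sigma> + (f \<sigma> * real_of_int (\<sigma> a)) * ising_weight E J \<sigma>) / 2"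
      by auto
  qed
  also have "\<dots> = (NN V E J T f + NN V E J T (\<lambda>\<omega>. f \<omega> * real_of_int (\<omega> a))) / 2"
    unfolding NN_def by (simp add: sum_divide_distrib[symmetric] sum.distrib)
  finally show ?thesis .
qed

definition flip :: "('v \<Rightarrow> int) \<Rightarrow> ('v \<Rightarrow> int)" where "flip \<sigma> = restrict (\<lambda>y. - \<sigma> y) V"

lemma flip_bij: "bij_betw flip (configs V) (configs V)"
proof (rule bij_betw_byWitness[where f'=flip])
  show "\<forall>a\<in>configs V. flip (flip a) = a"
    by (auto simp: flip_def configs_def PiE_def extensional_def fun_eq_iff)
  show "\<forall>a'\<in>configs V. flip (flip a') = a'"
    by (auto simp: flip_def configs_def PiE_def extensional_def fun_eq_iff)
  show "flip ` configs V \<subseteq> configs V" by (auto simp: flip_def configs_def)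
  show "flip ` configs V \<subseteq> configs V" by (auto simp: flip_def configs_def)
qed

lemma flip_weight: "ising_weight E J (flip \<sigma>) = ising_weight E J \<sigma>"
proof -
  have "(\<Prod>x\<in>e. flip \<sigma> x) = (\<Prod>x\<in>e. \<sigma> x)" if "e \<in> E" for e
  proof -
    from g that have sub: "e \<subseteq> V" and "card e = 2" by (auto simp: graph_def)
    then obtain x y where "e = {x,y}" "x \<noteq> y" by (auto simp: card_2_iff)
    with sub show ?thesis by (simp add: flip_def)
  qed
  then show ?thesis unfolding ising_weight_def by (simp cong: sum.cong)
qed

lemma sym0: assumes "x \<in> V" shows "N1 {} x = 0"
proof -
  have O: "Om V {} = configs V" by (simp add: Om_def)
  have "N1 {} x = (\<Sum>\<sigma>\<in>configs V. real_of_int (flip \<sigma> x) * ising_weight E J (flip \<sigma>))"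
    unfolding NN_def O by (rule sum.reindex_bij_betw[OF flip_bij, symmetric])
  also have "\<dots> = - N1 {} x"
    unfolding NN_def O using assms by (simp only: flip_weight) (simp add: flip_def sum_negf)
  finally show ?thesis by simp
qed

definition tr :: "'v set \<Rightarrow> 'v \<Rightarrow> 'v \<Rightarrow> real" where
  "tr T u b = (Zf T * N2 T u b - N1 T u * N1 T b) / Zf T ^ 2"

lemma tr_step: assumes "T \<subseteq> V" "a \<in> V" "u \<in> V" "b \<in> V"
  shows "tr (insert a T) u b \<le> tr T u b"
proof -
  define Z where "Z = Zf T"
  define Na where "Na = N1 T a"
  define Nu where "Nu = N1 T u"
  define Nb where "Nb = N1 T b"
  define Nub where "Nub = N2 T u b"
  define Nua where "Nua = N2 T u a"
  define Nba where "Nba = N2 T b a"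
  define Nuba where "Nuba = N3 T u b a"
  have Zp: "0 < Z" unfolding Z_def by (rule Z_pos[OF assms(1)])
  have Z'p: "0 < Zf (insert a T)" using assms by (intro Z_pos) auto
  have Z': "Zf (insert a T) = (Z + Na) / 2" unfolding Z_def Na_def by (simp add: NN_insert[OF assms(2)])
  have Nu': "N1 (insert a T) u = (Nu + Nua) / 2" unfolding Nu_def Nua_def by (simp add: NN_insert[OF assms(2)])
  have Nb': "N1 (insert a T) b = (Nb + Nba) / 2" unfolding Nb_def Nba_def by (simp add: NN_insert[OF assms(2)])
  have Nub': "N2 (insert a T) u b = (Nub + Nuba) / 2" unfolding Nub_def Nuba_def by (simp add: NN_insert[OF assms(2)])
  have Zap: "0 < Z + Na" using Z'p Z' by simp
  have G3: "Z ^ 2 * Nuba - Z * (Nub * Na + Nua * Nb + Nba * Nu) + 2 * Nu * Nb * Na \<le> 0"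
    using GHS[OF assms(1) assms(3) assms(4) assms(2)] unfolding Z_def Nuba_def Nub_def Na_def Nua_def Nb_def Nba_def Nu_def .
  have G2a: "0 \<le> Z * Nua - Nu * Na" using GII[OF assms(1) assms(3) assms(2)] unfolding Z_def Nua_def Nu_def Na_def by simp
  have G2b: "0 \<le> Z * Nba - Nb * Na" using GII[OF assms(1) assms(4) assms(2)] unfolding Z_def Nba_def Nb_def Na_def by simp
  have key: "Z^2 * ((Z+Na)*(Nub+Nuba) - (Nu+Nua)*(Nb+Nba)) \<le> (Z+Na)^2 * (Z*Nub - Nu*Nb)"
  proof -
    have id: "(Z+Na)^2 * (Z*Nub - Nu*Nb) - Z^2 * ((Z+Na)*(Nub+Nuba) - (Nu+Nua)*(Nb+Nba))
      = (Z + Na) * (- (Z ^ 2 * Nuba - Z * (Nub * Na + Nua * Nb + Nba * Nu) + 2 * Nu * Nb * Na))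
        + (Z * Nua - Nu * Na) * (Z * Nba - Nb * Na)"
      by (simp add: algebra_simps power2_eq_square)
    have "0 \<le> (Z + Na) * (- (Z ^ 2 * Nuba - Z * (Nub * Na + Nua * Nb + Nba * Nu) + 2 * Nu * Nb * Na))"
      using Zap G3 by (intro mult_nonneg_nonneg) auto
    moreover have "0 \<le> (Z * Nua - Nu * Na) * (Z * Nba - Nb * Na)" using G2a G2b by simp
    ultimately show ?thesis using id by linarith
  qed
  have "tr (insert a T) u b = ((Z+Na)*(Nub+Nuba) - (Nu+Nua)*(Nb+Nba)) / (Z+Na)^2"
  proof -
    have nz: "Z + Na \<noteq> 0" using Zap by simp
    have n: "(Z+Na)/2 * ((Nub+Nuba)/2) - (Nu+Nua)/2 * ((Nb+Nba)/2) = ((Z+Na)*(Nub+Nuba) - (Nu+Nua)*(Nb+Nba)) / 4"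
      by (simp add: field_simps)
    have d: "((Z+Na)/2)^2 = (Z+Na)^2/4" by (simp add: power_divide)
    have q: "(X/4)/(Y/4) = X/(Y::real)" for X Y by simp
    show ?thesis unfolding tr_def Z' Nu' Nb' Nub' n d q ..
  qed
  also have "\<dots> \<le> (Z*Nub - Nu*Nb) / Z^2"
    using key Zp Zap by (simp add: field_simps)
  also have "\<dots> = tr T u b" unfolding tr_def Z_def Nub_def Nu_def Nb_def ..
  finally show ?thesis .
qed

lemma tr_mono: assumes "finite T" "T \<subseteq> V" "u \<in> V" "b \<in> V" shows "tr T u b \<le> tr {} u b"
  using assms(1,2)
proof (induction T rule: finite_induct)
  case empty then show ?case by simp
next
  case (insert a T)
  then have "tr (insert a T) u b \<le> tr T u b" using assms by (intro tr_step) auto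
  also have "\<dots> \<le> tr {} u b" using insert by auto
  finally show ?case .
qed

definition mm :: "'v set \<Rightarrow> 'v \<Rightarrow> real" where "mm T u = N1 T u / Zf T"

lemma mm_empty: "u \<in> V \<Longrightarrow> mm {} u = 0" by (simp add: mm_def sym0)

lemma mm_single: assumes "u \<in> V" "b \<in> V" shows "mm {b} u = tr {} u b"
proof -
  have h1: "Zf {b} = Zf {} / 2" using NN_insert[OF assms(2), of "{}" "\<lambda>\<omega>. 1"] sym0[OF assms(2)] by simp
  have h2: "N1 {b} u = N2 {} u b / 2" using NN_insert[OF assms(2), of "{}" "\<lambda>\<omega>. real_of_int (\<omega> u)"] sym0[OF assms(1)] by simp
  have Z0: "0 < Zf {}" by (rule Z_pos) simp
  have q: "(X/2)/(Y/2) = X/(Y::real)" for X Y by simp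
  have "mm {b} u = N2 {} u b / Zf {}" unfolding mm_def h1 h2 q ..
  also have "\<dots> = tr {} u b" unfolding tr_def sym0[OF assms(1)] using Z0 by (simp add: power2_eq_square)
  finally show ?thesis .
qed

lemma KEY: assumes "finite T" "T \<subseteq> V" "u \<in> V" "b \<in> V" shows "mm (insert b T) u \<le> mm T u + mm {b} u"
proof -
  define Z where "Z = Zf T"
  define Nu where "Nu = N1 T u"
  define Nb where "Nb = N1 T b"
  define Nub where "Nub = N2 T u b"
  have Zp: "0 < Z" unfolding Z_def by (rule Z_pos[OF assms(2)])
  have Nbp: "0 \<le> Nb" unfolding Nb_def by (rule GI[OF assms(2,4)])
  have G: "0 \<le> Z * Nub - Nu * Nb" using GII[OF assms(2,3,4)] unfolding Z_def Nub_def Nu_def Nb_def by simp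
  have Z': "Zf (insert b T) = (Z + Nb) / 2" unfolding Z_def Nb_def by (simp add: NN_insert[OF assms(4)])
  have Nu': "N1 (insert b T) u = (Nu + Nub) / 2" unfolding Nu_def Nub_def by (simp add: NN_insert[OF assms(4)])
  have q: "(X/2)/(Y/2) = X/(Y::real)" for X Y by simp
  have m1: "mm (insert b T) u = (Nu + Nub) / (Z + Nb)" unfolding mm_def Z' Nu' q ..
  have "mm (insert b T) u - mm T u = (Z * Nub - Nu * Nb) / (Z * (Z + Nb))"
    unfolding m1 unfolding mm_def Z_def[symmetric] Nu_def[symmetric] using Zp Nbp by (simp add: field_simps)
  also have "\<dots> \<le> (Z * Nub - Nu * Nb) / Z ^ 2"
  proof (rule divide_left_mono)
    show "Z ^ 2 \<le> Z * (Z + Nb)" using Zp Nbp by (simp add: power2_eq_square algebra_simps)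
    show "0 \<le> Z * Nub - Nu * Nb" by (rule G)
    show "0 < Z * (Z + Nb) * Z ^ 2" using Zp Nbp by simp
  qed
  also have "\<dots> = tr T u b" unfolding tr_def Z_def Nub_def Nu_def Nb_def ..
  also have "\<dots> \<le> tr {} u b" by (rule tr_mono[OF assms])
  also have "\<dots> = mm {b} u" by (rule mm_single[OF assms(3,4), symmetric])
  finally show ?thesis by simp
qed

lemma MAIN: fixes k :: nat and v :: "nat \<Rightarrow> 'v" assumes "u \<in> V" "\<forall>i\<in>{1..k}. v i \<in> V"
  shows "mm (v ` {1..k}) u \<le> (\<Sum>i=1..k. mm {v i} u)"
  using assms(2)
proof (induction k)
  case 0 then show ?case using mm_empty[OF assms(1)] by simp
next
  case (Suc k)
  have im: "v ` {1..Suc k} = insert (v (Suc k)) (v ` {1..k})"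
    by (auto simp: atLeastAtMostSuc_conv)
  have sub: "v ` {1..k} \<subseteq> V" using Suc.prems by auto
  have vk: "v (Suc k) \<in> V" using Suc.prems by auto
  have "mm (v ` {1..Suc k}) u \<le> mm (v ` {1..k}) u + mm {v (Suc k)} u"
    unfolding im by (rule KEY[OF _ sub assms(1) vk]) simp
  also have "\<dots> \<le> (\<Sum>i=1..k. mm {v i} u) + mm {v (Suc k)} u" using Suc by simp
  finally show ?case by simp
qed

end



lemma cond_mm:
  assumes g: "graph V E" and Jn: "\<forall>e\<in>E. J e \<ge> 0" and A: "{\<sigma> \<in> configs V. A \<sigma>} = Om V T"
  shows "ising_cond_exp V E J (\<lambda>\<sigma>. real_of_int (\<sigma> u)) A = mm V E J T u"
proof -
  have Zi: "ising_Z V E J = NN V E J {} (\<lambda>\<omega>. 1)" by (simp add: ising_Z_def NN_def Om_def)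
  have Zp: "0 < ising_Z V E J" unfolding Zi by (rule Z_pos[OF g Jn]) simp
  have "ising_cond_exp V E J (\<lambda>\<sigma>. real_of_int (\<sigma> u)) A
     = (NN V E J T (\<lambda>\<omega>. real_of_int (\<omega> u)) / ising_Z V E J) / (NN V E J T (\<lambda>\<omega>. 1) / ising_Z V E J)"
    unfolding ising_cond_exp_def ising_mu_def A NN_def by (simp add: sum_divide_distrib)
  also have "\<dots> = mm V E J T u" unfolding mm_def[OF g Jn] using Zp by simp
  finally show ?thesis .
qed

theorem corollary2p6:
  fixes V :: "'a set" and E :: "'a set set" and J :: "'a set \<Rightarrow> real"
    and u :: 'a and k :: nat and v :: "nat \<Rightarrow> 'a"
  assumes "graph V E"
    and "\<forall>e\<in>E. J e \<ge> 0"
    and "u \<in> V"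
    and "\<forall>i\<in>{1..k}. v i \<in> V"
  shows "ising_cond_exp V E J (\<lambda>\<sigma>. real_of_int (\<sigma> u)) (\<lambda>\<sigma>. \<forall>i\<in>{1..k}. \<sigma> (v i) = 1)
         \<le> (\<Sum>i=1..k. ising_cond_exp V E J (\<lambda>\<sigma>. real_of_int (\<sigma> u)) (\<lambda>\<sigma>. \<sigma> (v i) = 1))"
proof -
  have L: "ising_cond_exp V E J (\<lambda>\<sigma>. real_of_int (\<sigma> u)) (\<lambda>\<sigma>. \<forall>i\<in>{1..k}. \<sigma> (v i) = 1) = mm V E J (v ` {1..k}) u"
    by (rule cond_mm[OF assms(1,2)]) (auto simp: Om_def)
  have R: "ising_cond_exp V E J (\<lambda>\<sigma>. real_of_int (\<sigma> u)) (\<lambda>\<sigma>. \<sigma> (v i) = 1) = mm V E J {v i} u" for i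
    by (rule cond_mm[OF assms(1,2)]) (auto simp: Om_def)
  show ?thesis unfolding L R by (rule MAIN[OF assms])
qed

end
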